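(* Let $\Phi:\ell^\infty(\mathbb Z)\to\ell^\infty(\mathbb Z)$ be a linear map commuting with the backward shift $B$, $(Bv)_n=v_{n+1}$. If $\Phi$ is weak*-continuous and idempotent ($\Phi\circ\Phi=\Phi$), then $\Phi$ is either the identity map or $0$.
   Context: The weak*-topology on $\ell^\infty(\mathbb Z)$ is the one coming from $\ell^\infty(\mathbb Z)=\ell^1(\mathbb Z)^*$. *)

theory Defs
  imports "HOL-Analysis.Analysis"
begin

definition ell_inf :: "(int \<Rightarrow> complex) set" where
  "ell_inf = {v. bounded (range v)}"

definition ell_one :: "(int \<Rightarrow> complex) set" where
  "ell_one = {a. (\<lambda>n. norm (a n)) summable_on UNIV}"

definition dual_pair :: "(int \<Rightarrow> complex) \<Rightarrow> (int \<Rightarrow> complex) \<Rightarrow> complex" where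
  "dual_pair a v = (\<Sum>\<^sub>\<infinity>n. a n * v n)"

text \<open>The weak-star topology on l-infinity(Z) coming from l-infinity = (l-1)^*:
  the coarsest topology on l-infinity making all v |-> sum a_n v_n (a in l-1) continuous.\<close>
definition weak_star_topology :: "(int \<Rightarrow> complex) topology" where
  "weak_star_topology = topology_generated_by
     {{v \<in> ell_inf. dual_pair a v \<in> U} | a U. a \<in> ell_one \<and> open U}"

definition backward_shift :: "(int \<Rightarrow> complex) \<Rightarrow> (int \<Rightarrow> complex)" where
  "backward_shift v = (\<lambda>n. v (n + 1))"

end

theory Submission
  imports Defs
begin

lemma ell_inf_iff: "v \<in> ell_inf \<longleftrightarrow> (\<exists>B. \<forall>n. norm (v n) \<le> B)"
  unfolding ell_inf_def bounded_iff by auto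

lemma zero_ell_one: "(\<lambda>n. 0) \<in> ell_one"
  by (simp add: ell_one_def)

lemma topspace_ws: "topspace weak_star_topology = ell_inf"
  unfolding weak_star_topology_def topology_generated_by_topspace
  using zero_ell_one by blast

lemma dual_pair_tendsto:
  assumes a: "a \<in> ell_one" and bnd: "\<And>k n. norm (s k n) \<le> B"
    and lim: "\<And>n. (\<lambda>k. s k n) \<longlonglongrightarrow> v n"
  shows "(\<lambda>k. dual_pair a (s k)) \<longlonglongrightarrow> dual_pair a v"
proof -
  have ia: "integrable (count_space UNIV) a"
    using a abs_summable_equivalent[of a UNIV] unfolding ell_one_def Infinite_Set_Sum.abs_summable_on_def by simp
  have iw: "integrable (count_space UNIV) (\<lambda>n. B * norm (a n))"
    using ia by (intro integrable_mult_right integrable_norm)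
  have lim': "AE n in count_space UNIV. (\<lambda>k. a n * s k n) \<longlonglongrightarrow> a n * v n"
    by (intro AE_I2 tendsto_mult tendsto_const lim)
  have bd: "AE n in count_space UNIV. norm (a n * s k n) \<le> B * norm (a n)" for k
    using bnd[of k] by (intro AE_I2) (simp add: norm_mult mult.commute[of "cmod (a _)"] mult_right_mono)
  have m1: "(\<lambda>n. a n * v n) \<in> borel_measurable (count_space UNIV)" by simp
  have m2: "(\<lambda>n. a n * s k n) \<in> borel_measurable (count_space UNIV)" for k by simp
  note D = integrable_dominated_convergence[OF m1 m2 iw lim' bd]
    integrable_dominated_convergence2[OF m1 m2 iw lim' bd]
    integral_dominated_convergence[OF m1 m2 iw lim' bd]
  have e1: "dual_pair a v = integral\<^sup>L (count_space UNIV) (\<lambda>n. a n * v n)"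
    unfolding dual_pair_def
    using infsetsum_infsum[of "\<lambda>n. a n * v n" UNIV] D(1)
    unfolding Infinite_Set_Sum.abs_summable_on_def infsetsum_def by simp
  have e2: "dual_pair a (s k) = integral\<^sup>L (count_space UNIV) (\<lambda>n. a n * s k n)" for k
    unfolding dual_pair_def
    using infsetsum_infsum[of "\<lambda>n. a n * s k n" UNIV] D(2)[of k]
    unfolding Infinite_Set_Sum.abs_summable_on_def infsetsum_def by simp
  show ?thesis unfolding e1 e2 by (rule D(3))
qed

lemma limitin_ws:
  assumes s: "\<And>k. s k \<in> ell_inf" and v: "v \<in> ell_inf" and bnd: "\<And>k n. norm (s k n) \<le> B"
    and lim: "\<And>n. (\<lambda>k. s k n) \<longlonglongrightarrow> v n"
  shows "limitin weak_star_topology s v sequentially"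
  unfolding limitin_def topspace_ws
proof (intro conjI allI impI v)
  fix U assume "openin weak_star_topology U \<and> v \<in> U"
  then have g: "generate_topology_on {{v \<in> ell_inf. dual_pair a v \<in> U} | a U. a \<in> ell_one \<and> open U} U" and "v \<in> U"
    unfolding weak_star_topology_def openin_topology_generated_by_iff by auto
  from g \<open>v \<in> U\<close> show "\<forall>\<^sub>F x in sequentially. s x \<in> U"
  proof (induction rule: generate_topology_on.induct)
    case Empty then show ?case by simp
  next
    case (Int a b) then show ?case by (auto intro: eventually_conj)
  next
    case (UN K)
    then obtain k where "k \<in> K" "v \<in> k" by auto
    then have "\<forall>\<^sub>F x in sequentially. s x \<in> k" using UN.IH by blast
    then show ?case by (rule eventually_mono) (use \<open>k \<in> K\<close> in blast)
  next
    case (Basis S)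
    then obtain a W where S: "S = {v \<in> ell_inf. dual_pair a v \<in> W}" and a: "a \<in> ell_one" and W: "open W" by auto
    have "\<forall>\<^sub>F k in sequentially. dual_pair a (s k) \<in> W"
      using dual_pair_tendsto[OF a bnd lim] W Basis.prems S by (auto simp: tendsto_def)
    then show ?case unfolding S using s by (auto elim: eventually_mono)
  qed
qed

lemma dual_pair_delta: "dual_pair (\<lambda>m. if m = n then 1 else 0) v = v n"
proof -
  have "dual_pair (\<lambda>m. if m = n then 1 else 0) v = (\<Sum>\<^sub>\<infinity>m\<in>{n}. v m)"
    unfolding dual_pair_def
    by (rule infsum_cong_neutral) auto
  then show ?thesis by simp
qed

lemma delta_ell_one: "(\<lambda>m. if m = n then 1 else 0 :: complex) \<in> ell_one"
proof -
  have "(\<lambda>m. norm (if m = n then 1 else 0 :: complex)) summable_on {n}" by simp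
  moreover have "(\<lambda>m. norm (if m = n then 1 else 0 :: complex)) summable_on {n} \<longleftrightarrow>
     (\<lambda>m. norm (if m = n then 1 else 0 :: complex)) summable_on UNIV"
    by (rule summable_on_cong_neutral) auto
  ultimately show ?thesis unfolding ell_one_def by simp
qed

lemma limitin_coord:
  assumes "limitin weak_star_topology w u F"
  shows "((\<lambda>k. w k n) \<longlongrightarrow> u n) F"
proof (rule topological_tendstoI)
  fix S assume S: "open S" "u n \<in> S"
  let ?O = "{v \<in> ell_inf. dual_pair (\<lambda>m. if m = n then 1 else 0) v \<in> S}"
  have "openin weak_star_topology ?O"
    unfolding weak_star_topology_def
    by (rule topology_generated_by_Basis) (use S delta_ell_one in blast)
  moreover have "u \<in> ?O" using assms S unfolding limitin_def topspace_ws by (simp add: dual_pair_delta)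
  ultimately have "\<forall>\<^sub>F k in F. w k \<in> ?O" using assms unfolding limitin_def by blast
  then show "\<forall>\<^sub>F k in F. w k n \<in> S" by (auto simp: dual_pair_delta elim: eventually_mono)
qed

lemma RU:
  assumes M: "M > 0"
  shows "(\<Sum>j<M. cis (2*pi*real j * of_int m / real M)) = (if int M dvd m then of_nat M else 0)"
proof (cases "int M dvd m")
  case True
  then obtain t where t: "m = int M * t" by blast
  have "cis (2*pi*real j * of_int m / real M) = 1" for j
  proof -
    have "2*pi*real j * of_int m / real M = 2*pi* of_int (int j * t)"
      using M by (simp add: t field_simps)
    then show ?thesis by simp
  qed
  then show ?thesis using True by simp
next
  case False
  define \<omega> where "\<omega> = cis (2*pi* of_int m / real M)"
  have pw: "\<omega> ^ j = cis (2*pi*real j * of_int m / real M)" for j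
    unfolding \<omega>_def by (subst Complex.DeMoivre) (simp add: mult_ac)
  have ne: "\<omega> \<noteq> 1"
  proof
    assume "\<omega> = 1"
    then have "cos (2*pi* of_int m / real M) = 1" unfolding \<omega>_def by (simp add: complex_eq_iff)
    then obtain k :: int where k: "2*pi* of_int m / real M = of_int k * (2*pi)"
      by (auto simp: cos_one_2pi_int)
    then have "real_of_int m = real_of_int (k * int M)" using M by (simp add: field_simps)
    then have "m = k * int M" by (simp only: of_int_eq_iff)
    with False show False by simp
  qed
  have "\<omega> ^ M = 1"
  proof -
    have "2*pi*real M * of_int m / real M = 2 * pi * of_int m" using M by simp
    then show ?thesis unfolding pw by simp
  qed
  then have "(\<Sum>j<M. \<omega> ^ j) = 0"
    using ne by (simp add: geometric_sum)
  then show ?thesis using False by (simp add: pw)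
qed

lemma ell_inf_add: "v \<in> ell_inf \<Longrightarrow> w \<in> ell_inf \<Longrightarrow> (\<lambda>n. v n + w n) \<in> ell_inf"
proof -
  assume "v \<in> ell_inf" "w \<in> ell_inf"
  then obtain A B where "\<forall>n. norm (v n) \<le> A" "\<forall>n. norm (w n) \<le> B" by (auto simp: ell_inf_iff)
  then have "\<forall>n. norm (v n + w n) \<le> A + B" by (meson add_mono norm_triangle_ineq order_trans)
  then show ?thesis by (auto simp: ell_inf_iff)
qed

lemma ell_inf_scale: "v \<in> ell_inf \<Longrightarrow> (\<lambda>n. c * v n) \<in> ell_inf"
proof -
  assume "v \<in> ell_inf"
  then obtain A where "\<forall>n. norm (v n) \<le> A" by (auto simp: ell_inf_iff)
  then have "\<forall>n. norm (c * v n) \<le> norm c * A" by (simp add: norm_mult mult_left_mono)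
  then show ?thesis by (auto simp: ell_inf_iff)
qed

lemma ell_inf_zero: "(\<lambda>n. 0) \<in> ell_inf"
  by (auto simp: ell_inf_iff)

lemma ell_inf_sum: "finite J \<Longrightarrow> (\<And>j. j \<in> J \<Longrightarrow> f j \<in> ell_inf) \<Longrightarrow> (\<lambda>n. \<Sum>j\<in>J. f j n) \<in> ell_inf"
  by (induction J rule: finite_induct) (auto simp: ell_inf_zero intro: ell_inf_add)

theorem proposition2p2:
  fixes \<Phi> :: "(int \<Rightarrow> complex) \<Rightarrow> (int \<Rightarrow> complex)"
  assumes maps: "\<And>v. v \<in> ell_inf \<Longrightarrow> \<Phi> v \<in> ell_inf"
    and additive: "\<And>v w. v \<in> ell_inf \<Longrightarrow> w \<in> ell_inf \<Longrightarrow> \<Phi> (\<lambda>n. v n + w n) = (\<lambda>n. \<Phi> v n + \<Phi> w n)"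
    and homogeneous: "\<And>c v. v \<in> ell_inf \<Longrightarrow> \<Phi> (\<lambda>n. c * v n) = (\<lambda>n. c * \<Phi> v n)"
    and commutes: "\<And>v. v \<in> ell_inf \<Longrightarrow> \<Phi> (backward_shift v) = backward_shift (\<Phi> v)"
    and weak_star_cont: "continuous_map weak_star_topology weak_star_topology \<Phi>"
    and idempotent: "\<And>v. v \<in> ell_inf \<Longrightarrow> \<Phi> (\<Phi> v) = \<Phi> v"
  shows "(\<forall>v \<in> ell_inf. \<Phi> v = v) \<or> (\<forall>v \<in> ell_inf. \<Phi> v = (\<lambda>n. 0))"
proof -
  have Phi0: "\<Phi> (\<lambda>n. 0) = (\<lambda>n. 0)"
    using homogeneous[of "\<lambda>n. 0" 0] ell_inf_zero by simp
  have Phi_sum: "\<Phi> (\<lambda>n. \<Sum>j\<in>J. f j n) = (\<lambda>n. \<Sum>j\<in>J. \<Phi> (f j) n)"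
    if "finite J" "\<And>j. j \<in> J \<Longrightarrow> f j \<in> ell_inf" for J and f :: "'b \<Rightarrow> int \<Rightarrow> complex"
    using that
  proof (induction J rule: finite_induct)
    case empty then show ?case using Phi0 by simp
  next
    case (insert x F)
    have "\<Phi> (\<lambda>n. \<Sum>j\<in>insert x F. f j n) = \<Phi> (\<lambda>n. f x n + (\<Sum>j\<in>F. f j n))"
      using insert by simp
    also have "\<dots> = (\<lambda>n. \<Phi> (f x) n + \<Phi> (\<lambda>n. \<Sum>j\<in>F. f j n) n)"
      using additive[of "f x" "\<lambda>n. \<Sum>j\<in>F. f j n"] insert ell_inf_sum[of F f] by simp
    also have "\<dots> = (\<lambda>n. \<Sum>j\<in>insert x F. \<Phi> (f j) n)"
      using insert by simp
    finally show ?case .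
  qed
  have Phi_lim: "(\<lambda>k. \<Phi> (s k) n) \<longlonglongrightarrow> \<Phi> v n"
    if "\<And>k. s k \<in> ell_inf" "v \<in> ell_inf" "\<And>k n. norm (s k n) \<le> B"
      "\<And>n. (\<lambda>k. s k n) \<longlonglongrightarrow> v n" for s v B n
  proof -
    have "limitin weak_star_topology (\<Phi> \<circ> s) (\<Phi> v) sequentially"
      by (rule continuous_map_limit[OF weak_star_cont limitin_ws[OF that]])
    from limitin_coord[OF this, of n] show ?thesis by (simp add: o_def)
  qed
  define ch where "ch = (\<lambda>(\<theta>::real) (n::int). cis (of_int n * \<theta>))"
  have chi_inf: "ch \<theta> \<in> ell_inf" for \<theta>
    unfolding ell_inf_iff ch_def by (rule exI[of _ 1]) simp
  have chi_shift: "backward_shift (ch \<theta>) = (\<lambda>n. cis \<theta> * ch \<theta> n)" for \<theta>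
    by (simp add: backward_shift_def ch_def cis_mult distrib_right add.commute)
  have eigen: "\<Phi> (ch \<theta>) = (\<lambda>n. \<Phi> (ch \<theta>) 0 * ch \<theta> n)" for \<theta>
  proof -
    define w where "w = \<Phi> (ch \<theta>)"
    have "backward_shift w = (\<lambda>n. cis \<theta> * w n)"
      unfolding w_def using commutes[OF chi_inf] homogeneous[OF chi_inf] chi_shift by metis
    then have rec: "w (n + 1) = cis \<theta> * w n" for n
      unfolding backward_shift_def by metis
    have wn: "w n = w 0 * ch \<theta> n" for n
    proof (induction n rule: int_induct[where k=0])
      case base then show ?case by (simp add: ch_def)
    next
      case (step1 i)
      then show ?case using rec[of i] by (simp add: ch_def cis_mult distrib_right algebra_simps)
    next
      case (step2 i)
      have "w i = cis \<theta> * w (i - 1)" using rec[of "i - 1"] by simp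
      then have "w (i - 1) = w i / cis \<theta>" by (simp add: field_simps)
      also have "\<dots> = w 0 * ch \<theta> (i - 1)"
        using step2 by (simp add: ch_def left_diff_distrib cis_divide[symmetric])
      finally show ?case .
    qed
    show ?thesis unfolding w_def[symmetric] by (intro ext wn)
  qed
  define c where "c = (\<lambda>\<theta>. \<Phi> (ch \<theta>) 0)"
  have c01: "c \<theta> \<in> {0, 1}" for \<theta>
  proof -
    have "\<Phi> (\<Phi> (ch \<theta>)) = \<Phi> (ch \<theta>)" by (rule idempotent[OF chi_inf])
    then have "\<Phi> (\<lambda>n. c \<theta> * ch \<theta> n) = (\<lambda>n. c \<theta> * ch \<theta> n)"
      using eigen[of \<theta>] unfolding c_def by metis
    then have "(\<lambda>n. c \<theta> * \<Phi> (ch \<theta>) n) = (\<lambda>n. c \<theta> * ch \<theta> n)"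
      using homogeneous[OF chi_inf] by metis
    then have "c \<theta> * \<Phi> (ch \<theta>) 0 = c \<theta> * ch \<theta> 0"
      by (rule fun_cong)
    then have "c \<theta> * c \<theta> = c \<theta>"
      unfolding c_def by (simp add: ch_def)
    then show ?thesis by (metis insert_iff mult_cancel_left2 mult_zero_left)
  qed
  have ccont: "continuous_on UNIV c"
  proof (rule continuous_on_sequentiallyI)
    fix u a assume "u \<longlonglongrightarrow> (a::real)"
    then have pt: "(\<lambda>k. ch (u k) n) \<longlonglongrightarrow> ch a n" for n
      unfolding ch_def by (auto intro!: tendsto_intros)
    show "(\<lambda>k. c (u k)) \<longlonglongrightarrow> c a"
      unfolding c_def by (rule Phi_lim[OF chi_inf chi_inf _ pt, of 1]) (simp add: ch_def)
  qed
  have "c constant_on UNIV"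
    by (rule continuous_finite_range_constant[OF connected_UNIV ccont])
      (rule finite_subset[of _ "{0,1}"], use c01 in auto)
  then have cconst: "c \<theta> = c 0" for \<theta>
    unfolding constant_on_def by auto
  define c0 where "c0 = c 0"
  define L where "L = {v \<in> ell_inf. \<Phi> v = (\<lambda>n. c0 * v n)}"
  have chiL: "ch \<theta> \<in> L" for \<theta>
  proof -
    have "\<Phi> (ch \<theta>) = (\<lambda>n. c \<theta> * ch \<theta> n)" using eigen[of \<theta>] unfolding c_def .
    then show ?thesis unfolding L_def c0_def using chi_inf cconst[of \<theta>] by simp
  qed
  have scaleL: "(\<lambda>n. a * v n) \<in> L" if "v \<in> L" for a v
    using that homogeneous ell_inf_scale unfolding L_def by (auto simp: algebra_simps)
  have sumL: "(\<lambda>n. \<Sum>j\<in>J. f j n) \<in> L" if "finite J" "\<And>j. j \<in> J \<Longrightarrow> f j \<in> L"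
    for J and f :: "'b \<Rightarrow> int \<Rightarrow> complex"
  proof -
    have fi: "f j \<in> ell_inf" if "j \<in> J" for j using that \<open>\<And>j. j \<in> J \<Longrightarrow> f j \<in> L\<close> L_def by blast
    have "\<Phi> (\<lambda>n. \<Sum>j\<in>J. f j n) = (\<lambda>n. \<Sum>j\<in>J. \<Phi> (f j) n)" by (rule Phi_sum[OF that(1) fi])
    also have "\<dots> = (\<lambda>n. c0 * (\<Sum>j\<in>J. f j n))"
      using that(2) unfolding L_def by (simp add: sum_distrib_left)
    finally show ?thesis unfolding L_def using ell_inf_sum[OF that(1) fi] by simp
  qed
  have limL: "v \<in> L" if "\<And>k. s k \<in> L" "v \<in> ell_inf" "\<And>k n. norm (s k n) \<le> B"
      "\<And>n. (\<lambda>k. s k n) \<longlonglongrightarrow> v n" for s v B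
  proof -
    have si: "s k \<in> ell_inf" for k using that(1) L_def by blast
    have "\<Phi> v n = c0 * v n" for n
    proof (rule LIMSEQ_unique)
      show "(\<lambda>k. \<Phi> (s k) n) \<longlonglongrightarrow> \<Phi> v n" by (rule Phi_lim[OF si that(2-4)])
      have "(\<lambda>k. c0 * s k n) \<longlonglongrightarrow> c0 * v n" by (intro tendsto_intros that(4))
      moreover have "\<Phi> (s k) n = c0 * s k n" for k using that(1)[of k] unfolding L_def by auto
      ultimately show "(\<lambda>k. \<Phi> (s k) n) \<longlonglongrightarrow> c0 * v n" by simp
    qed
    then show ?thesis unfolding L_def using that(2) by auto
  qed
  have eL: "(\<lambda>n. if int M dvd (n - m) then 1 else 0) \<in> L" if M: "M > 0" for M :: nat and m :: int
  proof -
    define A where "A = (\<lambda>j::nat. cis (- (2*pi*real j * of_int m / real M)) / of_nat M)"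
    define T where "T = (\<lambda>j::nat. 2*pi*real j / real M)"
    have eq: "(\<lambda>n. if int M dvd (n - m) then 1 else 0) = (\<lambda>n. \<Sum>j<M. A j * ch (T j) n)"
    proof (rule ext)
      fix n
      have t: "A j * ch (T j) n = cis (2*pi*real j * of_int (n - m) / real M) / of_nat M" for j
      proof -
        have arg: "of_int n * (2*pi*real j / real M) + - (2*pi*real j * of_int m / real M)
            = 2*pi*real j * of_int (n - m) / real M"
          using M by (simp add: field_simps)
        have "A j * ch (T j) n = (cis (of_int n * (2*pi*real j / real M)) * cis (- (2*pi*real j * of_int m / real M))) / of_nat M"
          unfolding A_def T_def ch_def by simp
        also have "\<dots> = cis (of_int n * (2*pi*real j / real M) + - (2*pi*real j * of_int m / real M)) / of_nat M"
          by (simp only: cis_mult)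
        finally show ?thesis unfolding arg .
      qed
      have "(\<Sum>j<M. A j * ch (T j) n) = (\<Sum>j<M. cis (2*pi*real j * of_int (n - m) / real M)) / of_nat M"
        unfolding t by (simp add: sum_divide_distrib)
      also have "\<dots> = (if int M dvd (n - m) then 1 else 0)"
        unfolding RU[OF M] using M by simp
      finally show "(if int M dvd (n - m) then 1 else 0) = (\<Sum>j<M. A j * ch (T j) n)" by simp
    qed
    show ?thesis unfolding eq by (intro sumL finite_lessThan scaleL chiL)
  qed
  have dL: "(\<lambda>n. if n = m then 1 else 0) \<in> L" for m :: int
  proof (rule limL[of "\<lambda>k. (\<lambda>n. if int (Suc k) dvd (n - m) then 1 else 0)" _ 1])
    show "(\<lambda>k. if int (Suc k) dvd (n - m) then 1 else 0) \<longlonglongrightarrow> (if n = m then 1 else (0::complex))" for n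
    proof (rule tendsto_eventually)
      show "\<forall>\<^sub>F k in sequentially. (if int (Suc k) dvd (n - m) then 1 else 0) = (if n = m then 1 else (0::complex))"
      proof (cases "n = m")
        case True then show ?thesis by simp
      next
        case False
        have "(if int (Suc k) dvd (n - m) then 1 else 0) = (0::complex)" if "k \<ge> nat \<bar>n - m\<bar>" for k
        proof -
          have "\<not> int (Suc k) dvd (n - m)"
          proof
            assume "int (Suc k) dvd (n - m)"
            from dvd_imp_le_int[OF _ this] False have "\<bar>int (Suc k)\<bar> \<le> \<bar>n - m\<bar>" by simp
            with that show False by simp
          qed
          then show ?thesis by simp
        qed
        then show ?thesis using False unfolding eventually_sequentially by (intro exI[of _ "nat \<bar>n - m\<bar>"]) simp
      qed
    qed
  next
    show "(\<lambda>n. if int (Suc k) dvd (n - m) then 1 else 0) \<in> L" for k by (rule eL) simp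
  qed (auto simp: ell_inf_iff intro!: exI[of _ 1])
  have trL: "(\<lambda>n. if \<bar>n\<bar> \<le> int N then v n else 0) \<in> L" if "v \<in> ell_inf" for v N
  proof -
    have eq: "(\<lambda>n. if \<bar>n\<bar> \<le> int N then v n else 0) = (\<lambda>n. \<Sum>k\<in>{- int N..int N}. v k * (if n = k then 1 else 0))"
    proof (rule ext)
      fix n
      have "(\<Sum>k\<in>{- int N..int N}. v k * (if n = k then 1 else 0)) = (\<Sum>k\<in>{- int N..int N}. if n = k then v k else 0)"
        by (rule sum.cong) auto
      also have "\<dots> = (if n \<in> {- int N..int N} then v n else 0)"
        by (simp add: sum.delta)
      finally show "(if \<bar>n\<bar> \<le> int N then v n else 0) = (\<Sum>k\<in>{- int N..int N}. v k * (if n = k then 1 else 0))"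
        by auto
    qed
    show ?thesis unfolding eq by (intro sumL finite_atLeastAtMost_int scaleL dL)
  qed
  have allL: "v \<in> L" if v: "v \<in> ell_inf" for v
  proof -
    obtain B where B: "\<And>n. norm (v n) \<le> B" using v by (auto simp: ell_inf_iff)
    have B0: "0 \<le> B" using B[of 0] norm_ge_zero order_trans by blast
    show ?thesis
    proof (rule limL[of "\<lambda>k. (\<lambda>n. if \<bar>n\<bar> \<le> int k then v n else 0)" _ B])
      show "(\<lambda>k. if \<bar>n\<bar> \<le> int k then v n else 0) \<longlonglongrightarrow> v n" for n
      proof (rule tendsto_eventually)
        show "\<forall>\<^sub>F k in sequentially. (if \<bar>n\<bar> \<le> int k then v n else 0) = v n"
          unfolding eventually_sequentially by (rule exI[of _ "nat \<bar>n\<bar>"]) auto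
      qed
    qed (use v B B0 trL in auto)
  qed
  have "c0 \<in> {0, 1}" unfolding c0_def by (rule c01)
  then show ?thesis
  proof
    assume "c0 = 0"
    then have "\<forall>v\<in>ell_inf. \<Phi> v = (\<lambda>n. 0)" using allL unfolding L_def by auto
    then show ?thesis by blast
  next
    assume "c0 \<in> {1}"
    then have "\<forall>v\<in>ell_inf. \<Phi> v = v" using allL unfolding L_def by auto
    then show ?thesis by blast
  qed
qed
end
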